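(* Let $n\ge 3$. There is no finite subset $Y\subseteq\mathbb{S}^{n-1}$ which is a spherical design of harmonic index $\{6,2\}$ and has \[|Y|=\frac{n(n+4)(2n+1)^2}{15(7n-4)},\] i.e. there exists no tight spherical design of harmonic index $\{6,2\}$ on $\mathbb{S}^{n-1}$ for $n\ge3$.
   Context: $\mathbb{S}^{n-1}$ is the unit sphere in $\mathbb{R}^n$. For $T\subseteq\mathbb{N}$, a finite $Y\subseteq\mathbb{S}^{n-1}$ is a spherical design of harmonic index $T$ if $\sum_{\mathbf{x}\in Y}f(\mathbf{x})=0$ for every real homogeneous harmonic polynomial $f$ in $n$ variables whose degree lies in $T$. With Gegenbauer polynomials $Q_{n,k}$ (orthogonal on $[-1,1]$ for the weight $(1-x^2)^{(n-3)/2}$, $Q_{n,k}(1)=\binom{n+k-1}{n-1}-\binom{n+k-3}{n-1}$; e.g. $Q_{n,2}(x)=\frac{(n+2)(nx^2-1)}{2}$), the polynomial $Q_{n,6}(x)+f_2Q_{n,2}(x)$ with $f_2=\frac{(n-2)(n+4)(n+10)}{32(n+8)}$ equals $ax^2(x^2-\alpha^2)^2-c_{n,T}$ with $a>0$, $\alpha^2=\frac{15}{2(n+8)}$, $c_{n,T}=\frac{(n+2)(n+6)(n+10)(7n-4)}{192(n+8)}$, giving the lower bound $|Y|\ge b_{n,T}=\frac{n(n+4)(2n+1)^2}{15(7n-4)}$ for designs of harmonic index $\{6,2\}$; a design attaining it is called tight. *)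

theory Defs
  imports "HOL-Analysis.Analysis"
begin

text \<open>A real polynomial in the variables indexed by the finite type 'n is represented
  by its coefficient function on exponent vectors (monomials), required to have finite support.\<close>

definition is_poly :: "(('n::finite \<Rightarrow> nat) \<Rightarrow> real) \<Rightarrow> bool" where
  "is_poly c \<longleftrightarrow> finite {a. c a \<noteq> 0}"

definition poly_eval :: "(('n::finite \<Rightarrow> nat) \<Rightarrow> real) \<Rightarrow> real ^ 'n \<Rightarrow> real" where
  "poly_eval c x = (\<Sum>a\<in>{a. c a \<noteq> 0}. c a * (\<Prod>i\<in>UNIV. (x $ i) ^ (a i)))"

definition homogeneous_of_degree :: "nat \<Rightarrow> (('n::finite \<Rightarrow> nat) \<Rightarrow> real) \<Rightarrow> bool" where
  "homogeneous_of_degree k c \<longleftrightarrow> (\<forall>a. c a \<noteq> 0 \<longrightarrow> (\<Sum>i\<in>UNIV. a i) = k)"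

text \<open>Harmonic: the (formal) Laplacian vanishes. The coefficient of the monomial with
  exponent b in sum_i d^2 f / dx_i^2 is sum_i (b i + 2)(b i + 1) c(b + 2 e_i).\<close>
definition harmonic_poly :: "(('n::finite \<Rightarrow> nat) \<Rightarrow> real) \<Rightarrow> bool" where
  "harmonic_poly c \<longleftrightarrow>
     (\<forall>b. (\<Sum>i\<in>UNIV. real ((b i + 2) * (b i + 1)) * c (b(i := b i + 2))) = 0)"

definition harmonic_index_design :: "nat set \<Rightarrow> (real ^ 'n::finite) set \<Rightarrow> bool" where
  "harmonic_index_design T Y \<longleftrightarrow>
     finite Y \<and> Y \<subseteq> sphere 0 1 \<and>
     (\<forall>c k. is_poly c \<and> homogeneous_of_degree k c \<and> harmonic_poly c \<and> k \<in> T
        \<longrightarrow> (\<Sum>x\<in>Y. poly_eval c x) = 0)"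

end

theory Submission
  imports Defs "HOL-Computational_Algebra.Primes"
begin


definition onep :: "(('n::finite \<Rightarrow> nat) \<Rightarrow> real)" where
  "onep a = (if a = (\<lambda>_. 0) then 1 else 0)"
definition sh :: "'n::finite \<Rightarrow> (('n \<Rightarrow> nat) \<Rightarrow> real) \<Rightarrow> ('n \<Rightarrow> nat) \<Rightarrow> real" where
  "sh i p a = (if a i = 0 then 0 else p (a(i := a i - 1)))"
definition dd :: "'n::finite \<Rightarrow> (('n \<Rightarrow> nat) \<Rightarrow> real) \<Rightarrow> ('n \<Rightarrow> nat) \<Rightarrow> real" where
  "dd i p a = real (a i + 1) * p (a(i := a i + 1))"
definition lap :: "(('n::finite \<Rightarrow> nat) \<Rightarrow> real) \<Rightarrow> ('n \<Rightarrow> nat) \<Rightarrow> real" where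
  "lap c b = (\<Sum>i\<in>UNIV. real ((b i + 2) * (b i + 1)) * c (b(i := b i + 2)))"
definition LM :: "real^'n::finite \<Rightarrow> (('n \<Rightarrow> nat) \<Rightarrow> real) \<Rightarrow> ('n \<Rightarrow> nat) \<Rightarrow> real" where
  "LM v p a = (\<Sum>i\<in>UNIV. v$i * sh i p a)"
definition DD :: "real^'n::finite \<Rightarrow> (('n \<Rightarrow> nat) \<Rightarrow> real) \<Rightarrow> ('n \<Rightarrow> nat) \<Rightarrow> real" where
  "DD v p a = (\<Sum>i\<in>UNIV. v$i * dd i p a)"
definition RR :: "(('n::finite \<Rightarrow> nat) \<Rightarrow> real) \<Rightarrow> ('n \<Rightarrow> nat) \<Rightarrow> real" where
  "RR p a = (\<Sum>i\<in>UNIV. sh i (sh i p) a)"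
definition EE :: "(('n::finite \<Rightarrow> nat) \<Rightarrow> real) \<Rightarrow> ('n \<Rightarrow> nat) \<Rightarrow> real" where
  "EE p a = (\<Sum>i\<in>UNIV. sh i (dd i p) a)"

lemma harmonic_lap: "harmonic_poly c \<longleftrightarrow> (\<forall>b. lap c b = 0)"
  by (simp add: harmonic_poly_def lap_def)

lemma lap_alt: "lap p a = (\<Sum>i\<in>UNIV. dd i (dd i p) a)"
  unfolding lap_def dd_def by (intro sum.cong) (auto simp: algebra_simps)

lemma lap_alt_fun: "lap p = (\<lambda>a. \<Sum>i\<in>UNIV. dd i (dd i p) a)"
  by (simp add: fun_eq_iff lap_alt)

lemma dd_sh: "dd j (sh i p) a = (if i = j then p a else 0) + sh i (dd j p) a"
proof (cases "i = j")
  case True then show ?thesis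
    by (cases "a i") (auto simp: dd_def sh_def fun_upd_idem algebra_simps)
next
  case False then show ?thesis
    by (auto simp: dd_def sh_def fun_upd_twist)
qed

lemma sh_add: "sh i (\<lambda>b. f b + g b) a = sh i f a + sh i g a" by (simp add: sh_def)
lemma sh_scale: "sh i (\<lambda>b. c * f b) a = c * sh i f a" by (simp add: sh_def)
lemma sh_sum: "sh i (\<lambda>b. \<Sum>j\<in>J. f j b) a = (\<Sum>j\<in>J. sh i (f j) a)" by (simp add: sh_def)
lemma sh_zero: "sh i (\<lambda>b. 0) a = 0" by (simp add: sh_def)
lemma dd_add: "dd i (\<lambda>b. f b + g b) a = dd i f a + dd i g a" by (simp add: dd_def algebra_simps)
lemma dd_scale: "dd i (\<lambda>b. c * f b) a = c * dd i f a" by (simp add: dd_def)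
lemma dd_sum: "dd i (\<lambda>b. \<Sum>j\<in>J. f j b) a = (\<Sum>j\<in>J. dd i (f j) a)" by (simp add: dd_def sum_distrib_left)
lemma lap_add: "lap (\<lambda>b. f b + g b) a = lap f a + lap g a" by (simp add: lap_def algebra_simps sum.distrib)
lemma lap_scale: "lap (\<lambda>b. c * f b) a = c * lap f a" by (simp add: lap_def sum_distrib_left algebra_simps)
lemma lap_sum: "lap (\<lambda>b. \<Sum>j\<in>J. f j b) a = (\<Sum>j\<in>J. lap (f j) a)"
  by (simp add: lap_def sum_distrib_left sum.swap[of _ J])
lemma sh_add_fun: "sh i (\<lambda>b. f b + g b) = (\<lambda>a. sh i f a + sh i g a)" by (simp add: sh_def fun_eq_iff)
lemma sh_scale_fun: "sh i (\<lambda>b. c * f b) = (\<lambda>a. c * sh i f a)" by (simp add: sh_def fun_eq_iff)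
lemma LM_add: "LM v (\<lambda>b. f b + g b) a = LM v f a + LM v g a"
  by (simp add: LM_def sh_add distrib_left sum.distrib)
lemma LM_scale: "LM v (\<lambda>b. c * f b) a = c * LM v f a"
  by (simp add: LM_def sh_scale sum_distrib_left algebra_simps)
lemma RR_add: "RR (\<lambda>b. f b + g b) a = RR f a + RR g a"
  by (simp add: RR_def sh_add_fun sh_add sum.distrib)
lemma RR_scale: "RR (\<lambda>b. c * f b) a = c * RR f a"
  by (simp add: RR_def sh_scale_fun sh_scale sum_distrib_left)

lemma lap_sh: "lap (sh i p) a = 2 * dd i p a + sh i (lap p) a"
proof -
  have "lap (sh i p) a = (\<Sum>j\<in>UNIV. dd j (\<lambda>b. (if i = j then p b else 0) + sh i (dd j p) b) a)"
    unfolding lap_alt by (intro sum.cong refl) (metis dd_sh)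
  also have "\<dots> = (\<Sum>j\<in>UNIV. (if i = j then dd j p a else 0) + ((if i = j then dd j p a else 0) + sh i (dd j (dd j p)) a))"
    apply (intro sum.cong refl)
    apply (subst dd_add)
    apply (subst dd_sh)
    apply (auto simp: dd_def)
    done
  also have "\<dots> = (\<Sum>j\<in>UNIV. 2 * (if i = j then dd j p a else 0)) + (\<Sum>j\<in>UNIV. sh i (dd j (dd j p)) a)"
    by (simp add: sum.distrib)
  also have "\<dots> = 2 * dd i p a + sh i (lap p) a"
    by (simp only: lap_alt_fun sh_sum) (simp add: sum_distrib_left[symmetric])
  finally show ?thesis .
qed

lemma dd_sh_fun: "dd j (sh i p) = (\<lambda>a. (if i = j then p a else 0) + sh i (dd j p) a)"
  using dd_sh by blast
lemma lap_sh_fun: "lap (sh i p) = (\<lambda>a. 2 * dd i p a + sh i (lap p) a)"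
  using lap_sh by blast
lemma LM_fun: "LM v p = (\<lambda>a. \<Sum>i\<in>UNIV. v$i * sh i p a)"
  by (simp add: LM_def fun_eq_iff)
lemma DD_fun: "DD v p = (\<lambda>a. \<Sum>i\<in>UNIV. v$i * dd i p a)"
  by (simp add: DD_def fun_eq_iff)
lemma RR_fun: "RR p = (\<lambda>a. \<Sum>i\<in>UNIV. sh i (sh i p) a)"
  by (simp add: RR_def fun_eq_iff)

lemma sh_if: "sh i (\<lambda>b. if P then f b else 0) a = (if P then sh i f a else 0)"
  by (simp add: sh_def)
lemma sum_delta_mult: "(\<Sum>i\<in>(UNIV::'n::finite set). f i * (if i = j then c else 0)) = f j * (c::real)"
  by (subst sum.cong[OF refl, of _ _ "\<lambda>i. if i = j then f i * c else 0"]) auto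

lemma lap_LM: "lap (LM v p) a = 2 * DD v p a + LM v (lap p) a"
proof -
  have "lap (LM v p) a = (\<Sum>i\<in>UNIV. v$i * lap (sh i p) a)"
    by (simp add: LM_fun lap_sum lap_scale)
  also have "\<dots> = (\<Sum>i\<in>UNIV. 2 * (v$i * dd i p a) + v$i * sh i (lap p) a)"
    by (simp add: lap_sh algebra_simps)
  also have "\<dots> = 2 * DD v p a + LM v (lap p) a"
    by (simp add: sum.distrib DD_def LM_def sum_distrib_left)
  finally show ?thesis .
qed

lemma DD_LM: "DD u (LM v p) a = (u \<bullet> v) * p a + LM v (DD u p) a"
proof -
  have "DD u (LM v p) a = (\<Sum>j\<in>UNIV. \<Sum>i\<in>UNIV. u$j * (v$i * ((if i = j then p a else 0) + sh i (dd j p) a)))"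
    by (simp add: DD_def LM_fun dd_sum dd_scale dd_sh sum_distrib_left)
  also have "\<dots> = (\<Sum>j\<in>UNIV. u$j * v$j * p a) + (\<Sum>j\<in>UNIV. \<Sum>i\<in>UNIV. v$i * (u$j * sh i (dd j p) a))"
    apply (simp only: distrib_left sum.distrib)
    apply (intro arg_cong2[where f="(+)"] sum.cong refl)
     apply (subst mult.assoc[symmetric], subst sum_delta_mult, simp)
    apply simp
    done
  also have "\<dots> = (u \<bullet> v) * p a + LM v (DD u p) a"
    by (simp add: inner_vec_def sum_distrib_left[symmetric] sum_distrib_right LM_def DD_fun sh_sum sh_scale
       sum.swap[of _ UNIV UNIV])
  finally show ?thesis .
qed

lemma dd_RR: "dd j (RR p) a = 2 * sh j p a + RR (dd j p) a"
proof -
  have "dd j (RR p) a = (\<Sum>i\<in>UNIV. (if i = j then sh i p a else 0) + ((if i = j then sh i p a else 0) + sh i (sh i (dd j p)) a))"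
    by (simp add: RR_fun dd_sum dd_sh dd_sh_fun sh_add sh_add_fun sh_if)
  also have "\<dots> = 2 * sh j p a + RR (dd j p) a"
    by (simp add: sum.distrib RR_def sum_distrib_left[symmetric])
  finally show ?thesis .
qed

lemma lap_RR: "lap (RR p) a = 2 * real CARD('n) * p a + 4 * EE p a + RR (lap p) a"
  for p :: "('n::finite \<Rightarrow> nat) \<Rightarrow> real"
proof -
  have "lap (RR p) a = (\<Sum>i\<in>UNIV. 2 * p a + 4 * sh i (dd i p) a + sh i (sh i (lap p)) a)"
    by (simp add: RR_fun lap_sum lap_sh dd_sh sh_add sh_scale lap_sh_fun sh_add_fun sh_scale_fun algebra_simps)
  also have "\<dots> = 2 * real CARD('n) * p a + 4 * EE p a + RR (lap p) a"
    by (simp add: sum.distrib EE_def RR_def sum_distrib_left)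
  finally show ?thesis .
qed

section \<open>Homogeneity\<close>

lemma sum_upd_nat: "sum (a(i:=x)) (UNIV::'n::finite set) + a i = sum a UNIV + (x::nat)"
proof -
  have "sum (a(i:=x)) UNIV = x + sum (a(i:=x)) (UNIV - {i})"
    by (subst sum.remove[of _ i]) auto
  moreover have "sum (a(i:=x)) (UNIV - {i}) = sum a (UNIV - {i})"
    by (intro sum.cong) auto
  moreover have "sum a UNIV = a i + sum a (UNIV - {i})"
    by (subst sum.remove[of _ i]) auto
  ultimately show ?thesis by simp
qed

lemma hom_one: "homogeneous_of_degree 0 onep"
  by (simp add: homogeneous_of_degree_def onep_def)

lemma hom_sh: "homogeneous_of_degree k p \<Longrightarrow> homogeneous_of_degree (Suc k) (sh i p)"
  unfolding homogeneous_of_degree_def sh_def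
proof (intro allI impI)
  fix a :: "'a \<Rightarrow> nat"
  assume h: "\<forall>a. p a \<noteq> 0 \<longrightarrow> sum a UNIV = k"
    and ne: "(if a i = 0 then 0 else p (a(i := a i - 1))) \<noteq> 0"
  then have "a i \<noteq> 0" "p (a(i := a i - 1)) \<noteq> 0" by (auto split: if_splits)
  with h have "sum (a(i := a i - 1)) UNIV = k" by blast
  with sum_upd_nat[of a i "a i - 1"] \<open>a i \<noteq> 0\<close> show "sum a UNIV = Suc k" by simp
qed

lemma hom_add: "homogeneous_of_degree k f \<Longrightarrow> homogeneous_of_degree k g \<Longrightarrow>
   homogeneous_of_degree k (\<lambda>b. f b + g b)"
  unfolding homogeneous_of_degree_def by (metis add_0 add.right_neutral)
lemma hom_scale: "homogeneous_of_degree k f \<Longrightarrow> homogeneous_of_degree k (\<lambda>b. c * f b)"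
  by (auto simp: homogeneous_of_degree_def)
lemma hom_sum: "(\<And>j. j \<in> J \<Longrightarrow> homogeneous_of_degree k (f j)) \<Longrightarrow>
   homogeneous_of_degree k (\<lambda>b. \<Sum>j\<in>J. f j b)"
  unfolding homogeneous_of_degree_def
  by (metis (mono_tags, lifting) sum.neutral)
lemma hom_LM: "homogeneous_of_degree k p \<Longrightarrow> homogeneous_of_degree (Suc k) (LM v p)"
  unfolding LM_fun by (intro hom_sum hom_scale hom_sh)
lemma hom_RR: "homogeneous_of_degree k p \<Longrightarrow> homogeneous_of_degree (Suc (Suc k)) (RR p)"
  unfolding RR_fun by (intro hom_sum hom_sh)

lemma EE_hom: assumes "homogeneous_of_degree k p" shows "EE p a = real k * p a"
proof -
  have "EE p a = (\<Sum>i\<in>UNIV. real (a i) * p a)"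
    unfolding EE_def sh_def dd_def by (intro sum.cong) auto
  also have "\<dots> = real (sum a UNIV) * p a" by (simp add: sum_distrib_right)
  also have "\<dots> = real k * p a" using assms by (cases "p a = 0") (auto simp: homogeneous_of_degree_def)
  finally show ?thesis .
qed

section \<open>Evaluation\<close>

definition mon :: "('n::finite \<Rightarrow> nat) \<Rightarrow> real^'n \<Rightarrow> real" where
  "mon a x = (\<Prod>i\<in>UNIV. (x $ i) ^ (a i))"

definition Hs :: "nat \<Rightarrow> ('n::finite \<Rightarrow> nat) set" where
  "Hs k = {a. sum a UNIV = k}"

lemma finite_Hs: "finite (Hs k :: ('n::finite \<Rightarrow> nat) set)"
proof -
  have "Hs k \<subseteq> (PiE (UNIV::'n set) (\<lambda>_. {..k}))"
  proof
    fix a :: "'n \<Rightarrow> nat" assume "a \<in> Hs k"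
    have "\<forall>i. a i \<le> sum a UNIV" by (intro allI member_le_sum) auto
    then have "\<forall>i. a i \<le> k" using \<open>a \<in> Hs k\<close> unfolding Hs_def by simp
    then show "a \<in> PiE UNIV (\<lambda>_. {..k})" by (simp add: PiE_UNIV_domain)
  qed
  moreover have "finite (PiE (UNIV::'n set) (\<lambda>_. {..k}))" by (intro finite_PiE) auto
  ultimately show ?thesis by (rule finite_subset)
qed

lemma hom_supp: "homogeneous_of_degree k p \<Longrightarrow> {a. p a \<noteq> 0} \<subseteq> Hs k"
  by (auto simp: homogeneous_of_degree_def Hs_def)

lemma hom_is_poly: "homogeneous_of_degree k p \<Longrightarrow> is_poly p"
  unfolding is_poly_def using finite_subset[OF hom_supp finite_Hs] .

lemma eval_super: assumes "finite S" "{a. p a \<noteq> 0} \<subseteq> S"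
  shows "poly_eval p x = (\<Sum>a\<in>S. p a * mon a x)"
  unfolding poly_eval_def mon_def
  by (rule sum.mono_neutral_left) (use assms in auto)

lemma eval_hom: "homogeneous_of_degree k p \<Longrightarrow> poly_eval p x = (\<Sum>a\<in>Hs k. p a * mon a x)"
  by (rule eval_super[OF finite_Hs hom_supp])

lemma eval_add: assumes "homogeneous_of_degree k f" "homogeneous_of_degree k g"
  shows "poly_eval (\<lambda>b. f b + g b) x = poly_eval f x + poly_eval g x"
proof -
  have "poly_eval (\<lambda>b. f b + g b) x = (\<Sum>a\<in>Hs k. (f a + g a) * mon a x)"
    by (rule eval_hom[OF hom_add[OF assms]])
  then show ?thesis by (simp add: eval_hom[OF assms(1)] eval_hom[OF assms(2)] algebra_simps sum.distrib)
qed
lemma eval_scale: assumes "homogeneous_of_degree k f"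
  shows "poly_eval (\<lambda>b. c * f b) x = c * poly_eval f x"
proof -
  have "poly_eval (\<lambda>b. c * f b) x = (\<Sum>a\<in>Hs k. (c * f a) * mon a x)"
    by (rule eval_hom[OF hom_scale[OF assms]])
  then show ?thesis by (simp add: eval_hom[OF assms(1)] sum_distrib_left algebra_simps)
qed
lemma eval_sum: assumes "\<And>j. j \<in> J \<Longrightarrow> homogeneous_of_degree k (f j)"
  shows "poly_eval (\<lambda>b. \<Sum>j\<in>J. f j b) x = (\<Sum>j\<in>J. poly_eval (f j) x)"
proof -
  have "poly_eval (\<lambda>b. \<Sum>j\<in>J. f j b) x = (\<Sum>a\<in>Hs k. (\<Sum>j\<in>J. f j a) * mon a x)"
    by (rule eval_hom[OF hom_sum[OF assms]])
  also have "\<dots> = (\<Sum>j\<in>J. \<Sum>a\<in>Hs k. f j a * mon a x)"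
    by (simp add: sum_distrib_right sum.swap[of _ J])
  also have "\<dots> = (\<Sum>j\<in>J. poly_eval (f j) x)"
    by (intro sum.cong refl) (simp add: eval_hom[OF assms])
  finally show ?thesis .
qed

lemma mon_upd: "mon (b(i := b i + 1)) x = x$i * mon b x"
proof -
  have "mon (b(i := b i + 1)) x = x$i^(b i + 1) * (\<Prod>j\<in>UNIV-{i}. x$j ^ b j)"
    unfolding mon_def by (subst prod.remove[of _ i]) (auto intro!: prod.cong)
  moreover have "mon b x = x$i^(b i) * (\<Prod>j\<in>UNIV-{i}. x$j ^ b j)"
    unfolding mon_def by (subst prod.remove[of _ i]) auto
  ultimately show ?thesis by simp
qed

lemma mon_upd': "mon (b(i := Suc (b i))) x = x$i * mon b x"
  using mon_upd[of b i x] by simp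

lemma eval_sh: fixes p :: "('n::finite \<Rightarrow> nat) \<Rightarrow> real"
  assumes "homogeneous_of_degree k p"
  shows "poly_eval (sh i p) x = x$i * poly_eval p x"
proof -
  let ?g = "\<lambda>b::'n \<Rightarrow> nat. b(i := b i + 1)"
  have inj: "inj ?g"
  proof -
    have li: "\<And>b. (?g b)(i := (?g b) i - 1) = b" by (simp add: fun_eq_iff)
    show ?thesis by (rule injI) (metis li)
  qed
  have sub: "{a. sh i p a \<noteq> 0} \<subseteq> ?g ` Hs k"
  proof
    fix a assume "a \<in> {a. sh i p a \<noteq> 0}"
    then have "a i \<noteq> 0" "p (a(i := a i - 1)) \<noteq> 0" by (auto simp: sh_def split: if_splits)
    then have "a(i := a i - 1) \<in> Hs k" using hom_supp[OF assms] by auto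
    moreover have "a = ?g (a(i := a i - 1))" using \<open>a i \<noteq> 0\<close> by (simp add: fun_eq_iff)
    ultimately show "a \<in> ?g ` Hs k" by blast
  qed
  have "poly_eval (sh i p) x = (\<Sum>a\<in>?g ` Hs k. sh i p a * mon a x)"
    by (rule eval_super[OF finite_imageI[OF finite_Hs] sub])
  also have "\<dots> = (\<Sum>b\<in>Hs k. sh i p (?g b) * mon (?g b) x)"
    by (rule sum.reindex[OF inj_on_subset[OF inj subset_UNIV], unfolded comp_def])
  also have "\<dots> = (\<Sum>b\<in>Hs k. x$i * (p b * mon b x))"
    by (intro sum.cong refl) (simp add: sh_def mon_upd')
  also have "\<dots> = x$i * poly_eval p x" by (simp add: eval_hom[OF assms] sum_distrib_left)
  finally show ?thesis .
qed

lemma eval_LM: assumes "homogeneous_of_degree k p"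
  shows "poly_eval (LM v p) x = (v \<bullet> x) * poly_eval p x"
proof -
  have "poly_eval (LM v p) x = (\<Sum>i\<in>UNIV. poly_eval (\<lambda>a. v$i * sh i p a) x)"
    unfolding LM_fun by (rule eval_sum[where k="Suc k"]) (intro hom_scale hom_sh assms)
  also have "\<dots> = (\<Sum>i\<in>UNIV. v$i * (x$i * poly_eval p x))"
    by (intro sum.cong refl) (simp add: eval_scale[OF hom_sh[OF assms]] eval_sh[OF assms])
  also have "\<dots> = (\<Sum>i\<in>UNIV. v$i * x$i) * poly_eval p x"
    by (simp add: sum_distrib_right mult.assoc)
  finally show ?thesis by (simp add: inner_vec_def)
qed

lemma eval_RR: assumes "homogeneous_of_degree k p"
  shows "poly_eval (RR p) x = (x \<bullet> x) * poly_eval p x"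
proof -
  have "poly_eval (RR p) x = (\<Sum>i\<in>UNIV. poly_eval (sh i (sh i p)) x)"
    unfolding RR_fun by (rule eval_sum[where k="Suc (Suc k)"]) (intro hom_sh assms)
  also have "\<dots> = (\<Sum>i\<in>UNIV. x$i * (x$i * poly_eval p x))"
    by (intro sum.cong refl) (simp add: eval_sh[OF hom_sh[OF assms]] eval_sh[OF assms])
  also have "\<dots> = (\<Sum>i\<in>UNIV. x$i * x$i) * poly_eval p x"
    by (simp add: sum_distrib_right mult.assoc)
  finally show ?thesis by (simp add: inner_vec_def)
qed

lemma eval_one: "poly_eval onep x = 1"
proof -
  have "poly_eval onep x = (\<Sum>a\<in>{\<lambda>_. 0}. onep a * mon a x)"
    by (rule eval_super) (auto simp: onep_def split: if_splits)
  then show ?thesis by (simp add: onep_def mon_def)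
qed

section \<open>Zonal building blocks\<close>

definition T :: "real^'n::finite \<Rightarrow> nat \<Rightarrow> nat \<Rightarrow> ('n \<Rightarrow> nat) \<Rightarrow> real" where
  "T y j k = (RR ^^ j) ((LM y ^^ k) onep)"

lemma T_00: "T y 0 0 = onep" by (simp add: T_def)
lemma T_0S: "T y 0 (Suc k) = LM y (T y 0 k)" by (simp add: T_def)
lemma T_S: "T y (Suc j) k = RR (T y j k)" by (simp add: T_def)

lemma hom_T: "homogeneous_of_degree (2*j+k) (T y j k)"
proof (induction j)
  case 0
  show ?case by (induction k) (simp_all add: T_00 T_0S hom_one hom_LM)
next
  case (Suc j)
  then show ?case using hom_RR[OF Suc.IH] by (simp add: T_S)
qed

lemma eval_T: "poly_eval (T y j k) x = (x \<bullet> x)^j * (y \<bullet> x)^k"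
proof (induction j)
  case 0
  show ?case
  proof (induction k)
    case 0 then show ?case by (simp add: T_00 eval_one)
  next
    case (Suc k) then show ?case
      using eval_LM[OF hom_T[of 0 k y]] by (simp add: T_0S)
  qed
next
  case (Suc j)
  then show ?case using eval_RR[OF hom_T[of j k y]] by (simp add: T_S)
qed

lemma upd_ne0: "c > 0 \<Longrightarrow> a(i := a i + c) \<noteq> (\<lambda>_. 0::nat)"
proof
  assume "c > 0" "a(i := a i + c) = (\<lambda>_. 0)"
  then have "(a(i := a i + c)) i = 0" by simp
  with \<open>c > 0\<close> show False by simp
qed

lemma DD_one: "DD v onep a = 0"
proof -
  have "onep (a(i := a i + 1)) = 0" for i using upd_ne0[of 1 a i] by (simp add: onep_def)
  then show ?thesis by (simp add: DD_def dd_def)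
qed

lemma lap_one: "lap onep a = 0"
proof -
  have "onep (a(i := a i + 2)) = 0" for i using upd_ne0[of 2 a i] by (simp add: onep_def)
  then show ?thesis by (simp add: lap_def)
qed

lemma DD_T0: "DD y (T y 0 k) a = real k * (y \<bullet> y) * T y 0 (k - 1) a"
proof (induction k arbitrary: a)
  case 0 then show ?case by (simp add: T_00 DD_one)
next
  case (Suc k)
  have f: "DD y (T y 0 k) = (\<lambda>b. (real k * (y \<bullet> y)) * T y 0 (k - 1) b)"
    using Suc.IH by (simp add: fun_eq_iff)
  have "DD y (T y 0 (Suc k)) a = (y \<bullet> y) * T y 0 k a + (real k * (y \<bullet> y)) * LM y (T y 0 (k - 1)) a"
    by (simp add: T_0S DD_LM f LM_scale)
  also have "\<dots> = real (Suc k) * (y \<bullet> y) * T y 0 k a"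
    by (cases k) (simp_all add: T_0S algebra_simps)
  finally show ?case by simp
qed

lemma lap_T0: "lap (T y 0 k) a = real k * (real k - 1) * (y \<bullet> y) * T y 0 (k - 2) a"
proof (induction k arbitrary: a)
  case 0 then show ?case by (simp add: T_00 lap_one)
next
  case (Suc k)
  have f: "lap (T y 0 k) = (\<lambda>b. (real k * (real k - 1) * (y \<bullet> y)) * T y 0 (k - 2) b)"
    using Suc.IH by (simp add: fun_eq_iff)
  have "lap (T y 0 (Suc k)) a = 2 * (real k * (y \<bullet> y) * T y 0 (k - 1) a) + (real k * (real k - 1) * (y \<bullet> y)) * LM y (T y 0 (k - 2)) a"
    by (simp add: T_0S lap_LM DD_T0 f LM_scale)
  also have "\<dots> = real (Suc k) * (real (Suc k) - 1) * (y \<bullet> y) * T y 0 (Suc k - 2) a"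
  proof (cases "k \<ge> 2")
    case True
    then have "LM y (T y 0 (k - 2)) = T y 0 (k - 1)"
      by (metis T_0S Suc_diff_le Suc_1 diff_Suc_Suc)
    then show ?thesis using True by (simp add: algebra_simps Suc_diff_Suc numeral_2_eq_2)
  next
    case False
    then have "k = 0 \<or> k = 1" by arith
    then show ?thesis by auto
  qed
  finally show ?case .
qed

definition cc :: "real \<Rightarrow> nat \<Rightarrow> nat \<Rightarrow> real" where
  "cc n j k = real j * (2 * n + 4 * real k) + 4 * real j * (real j - 1)"

lemma lap_T: "lap (T y j k) a = real k * (real k - 1) * (y \<bullet> y) * T y j (k - 2) a
    + cc (real CARD('n)) j k * T y (j - 1) k a"
  for y :: "real^'n::finite"
proof (induction j arbitrary: a)
  case 0 then show ?case by (simp add: lap_T0 cc_def)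
next
  case (Suc j)
  have f: "lap (T y j k) = (\<lambda>b. (real k * (real k - 1) * (y \<bullet> y)) * T y j (k - 2) b
    + cc (real CARD('n)) j k * T y (j - 1) k b)"
    using Suc.IH by (simp add: fun_eq_iff)
  have "lap (T y (Suc j) k) a = 2 * real CARD('n) * T y j k a + 4 * (real (2*j+k) * T y j k a)
     + ((real k * (real k - 1) * (y \<bullet> y)) * T y (Suc j) (k - 2) a + cc (real CARD('n)) j k * RR (T y (j - 1) k) a)"
    by (simp add: T_S lap_RR EE_hom[OF hom_T] f RR_add RR_scale)
  also have "\<dots> = real k * (real k - 1) * (y \<bullet> y) * T y (Suc j) (k - 2) a
    + cc (real CARD('n)) (Suc j) k * T y (Suc j - 1) k a"
  proof (cases j)
    case 0 then show ?thesis by (simp add: cc_def algebra_simps)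
  next
    case (Suc j') then show ?thesis by (simp add: cc_def T_S algebra_simps)
  qed
  finally show ?case .
qed




lemma le7: "i \<le> (7::nat) \<Longrightarrow> i = 0 \<or> i = 1 \<or> i = 2 \<or> i = 3 \<or> i = 4 \<or> i = 5 \<or> i = 6 \<or> i = 7" by arith
lemma le2: "i \<le> (2::nat) \<Longrightarrow> i = 0 \<or> i = 1 \<or> i = 2" by arith

lemma nt: fixes n N :: nat assumes n3: "n \<ge> 3" and eq: "N * (15*(7*n-4)) = n*(n+4)*(2*n+1)^2"
  shows "n = 12 \<or> n = 92"
proof -
  define m where "m = 7*n - 4"
  have m7: "7*n = m + 4" using n3 unfolding m_def by simp
  have "n*(n+4)*(2*n+1)^2 = m * (15*N)" unfolding m_def eq[symmetric] by (simp only: ac_simps)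
  then have "m dvd n*(n+4)*(2*n+1)^2" by (simp only: dvd_triv_left)
  then have d1: "m dvd 2401*(n*(n+4)*(2*n+1)^2)" by (rule dvd_mult)
  have e1: "2401*(n*(n+4)*(2*n+1)^2) = (7*n)*(7*n+28)*(2*(7*n)+7)^2" by algebra
  have e2: "(7*n)*(7*n+28)*(2*(7*n)+7)^2 = m*(4*m^3 + 204*m^2 + 2897*m + 15780) + 28800" unfolding m7 by algebra
  have "m dvd m*(4*m^3 + 204*m^2 + 2897*m + 15780) + 28800" using d1 unfolding e1 e2 .
  then have "m dvd 28800" by (simp only: dvd_add_right_iff dvd_triv_left)
  then have "m dvd 2^7 * (3^2 * 5^2)" by simp
  then obtain a b where ab: "m = a*b" "a dvd 2^7" "b dvd 3^2 * 5^2" using division_decomp by blast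
  then obtain c d where cd: "b = c*d" "c dvd 3^2" "d dvd 5^2" using division_decomp by blast
  have s3: "{2..<3::nat} = {2}" "{2..<5::nat} = {2,3,4}" by auto
  have p2: "prime (2::nat)" by simp
  have p3: "prime (3::nat)" by (simp add: prime_nat_iff' s3)
  have p5: "prime (5::nat)" by (simp add: prime_nat_iff' s3)
  obtain i where i: "i \<le> 7" "a = 2^i" using ab(2) divides_primepow_nat[OF p2, of a 7] by blast
  obtain j where j: "j \<le> 2" "c = 3^j" using cd(2) divides_primepow_nat[OF p3, of c 2] by blast
  obtain k where k: "k \<le> 2" "d = 5^k" using cd(3) divides_primepow_nat[OF p5, of d 2] by blast
  have "m = 2^i * 3^j * 5^k" using ab cd i j k by simp
  then have "7*n = 2^i * 3^j * 5^k + 4" using m7 by simp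
  with le7[OF i(1)] le2[OF j(1)] le2[OF k(1)] have
    "n = 4 \<or> n = 7 \<or> n = 12 \<or> n = 22 \<or> n = 28 \<or> n = 52 \<or> n = 92 \<or> n = 172 \<or> n = 412 \<or> n = 1372 \<or> n < 3"
    apply (elim disjE)
    apply simp_all
    apply presburger+
    done
  then show ?thesis using eq n3 by (elim disjE) (simp_all, presburger+)
qed



definition zb1 :: "real \<Rightarrow> real" where "zb1 n = -15/(n+8)"
definition zb2 :: "real \<Rightarrow> real" where "zb2 n = 45/((n+8)*(n+6))"
definition zb3 :: "real \<Rightarrow> real" where "zb3 n = -15/((n+8)*(n+6)*(n+4))"

definition Z6 :: "real^'n::finite \<Rightarrow> ('n \<Rightarrow> nat) \<Rightarrow> real" where
  "Z6 y = (\<lambda>a. ((T y 0 6 a + zb1 (real CARD('n)) * T y 1 4 a) + zb2 (real CARD('n)) * T y 2 2 a)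
      + zb3 (real CARD('n)) * T y 3 0 a)"

definition W2 :: "real^'n::finite \<Rightarrow> ('n \<Rightarrow> nat) \<Rightarrow> real" where
  "W2 u = (\<lambda>a. T u 0 2 a + (- (u \<bullet> u) / real CARD('n)) * T u 1 0 a)"

lemma hom_T': "d = 2*j+k \<Longrightarrow> homogeneous_of_degree d (T y j k)"
  using hom_T by simp

lemma hT: "homogeneous_of_degree 6 (T y 0 6)" "homogeneous_of_degree 6 (T y 1 4)"
  "homogeneous_of_degree 6 (T y 2 2)" "homogeneous_of_degree 6 (T y 3 0)"
  "homogeneous_of_degree 2 (T y 0 2)" "homogeneous_of_degree 2 (T y 1 0)"
  by (rule hom_T'; simp)+

lemma eval4: assumes "homogeneous_of_degree k f1" "homogeneous_of_degree k f2"
   "homogeneous_of_degree k f3" "homogeneous_of_degree k f4"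
  shows "poly_eval (\<lambda>a. f1 a + c2 * f2 a + c3 * f3 a + c4 * f4 a) x =
     poly_eval f1 x + c2 * poly_eval f2 x + c3 * poly_eval f3 x + c4 * poly_eval f4 x"
  using assms
  by (simp add: eval_add[OF hom_add[OF hom_add] hom_scale] eval_add[OF hom_add hom_scale]
        eval_add[OF _ hom_scale] eval_scale hom_scale)

lemma eval2: assumes "homogeneous_of_degree k f1" "homogeneous_of_degree k f2"
  shows "poly_eval (\<lambda>a. f1 a + c2 * f2 a) x = poly_eval f1 x + c2 * poly_eval f2 x"
  using assms by (simp add: eval_add[OF _ hom_scale] eval_scale)

lemma lap4: "lap (\<lambda>a. f1 a + c2 * f2 a + c3 * f3 a + c4 * f4 a) b =
     lap f1 b + c2 * lap f2 b + c3 * lap f3 b + c4 * lap f4 b"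
  by (simp only: lap_add lap_scale)
lemma lap2: "lap (\<lambda>a. f1 a + c2 * f2 a) b = lap f1 b + c2 * lap f2 b"
  by (simp only: lap_add lap_scale)

lemma hom_Z6: "homogeneous_of_degree 6 (Z6 y)"
  unfolding Z6_def by (intro hom_add hom_scale hT)

lemma hom_W2: "homogeneous_of_degree 2 (W2 y)"
  unfolding W2_def by (intro hom_add hom_scale hT)

lemma eval_Z6: "poly_eval (Z6 y) x = (y \<bullet> x)^6 + zb1 (real CARD('n)) * ((x \<bullet> x) * (y \<bullet> x)^4)
   + zb2 (real CARD('n)) * ((x \<bullet> x)^2 * (y \<bullet> x)^2) + zb3 (real CARD('n)) * ((x \<bullet> x)^3)"
  for y :: "real^'n::finite"
  unfolding Z6_def eval4[OF hT(1-4)] eval_T by simp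

lemma eval_W2: "poly_eval (W2 u) x = (u \<bullet> x)^2 + (- (u \<bullet> u) / real CARD('n)) * (x \<bullet> x)"
  for u :: "real^'n::finite"
  unfolding W2_def eval2[OF hT(5,6)] eval_T by simp

lemma zonal_coeff: assumes "(n::real) > 0"
  shows "30*A + zb1 n * (12*B + cc n 1 4 * A) + zb2 n * (2*C + cc n 2 2 * B) + zb3 n * (cc n 3 0 * C) = 0"
proof -
  have h: "n + 8 \<noteq> 0" "n + 6 \<noteq> 0" "n + 4 \<noteq> 0" using assms by linarith+
  have c: "cc n 1 4 = 2*(n+8)" "cc n 2 2 = 4*(n+6)" "cc n 3 0 = 6*(n+4)" by (simp_all add: cc_def algebra_simps)
  have e1: "30 + zb1 n * (2*(n+8)) = 0" using h by (simp add: zb1_def field_simps)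
  have g2: "\<And>p q::real. p \<noteq> 0 \<Longrightarrow> q \<noteq> 0 \<Longrightarrow> 45/(p*q) * (4*q) = 180/p" by (simp add: field_simps)
  have g3: "\<And>p q r::real. p \<noteq> 0 \<Longrightarrow> q \<noteq> 0 \<Longrightarrow> r \<noteq> 0 \<Longrightarrow> -15/(p*q*r) * (6*r) = -90/(p*q)"
    by (simp add: field_simps)
  have q2: "zb2 n * (4*(n+6)) = 180/(n+8)" unfolding zb2_def by (rule g2[OF h(1,2)])
  have q3: "zb3 n * (6*(n+4)) = -90/((n+8)*(n+6))" unfolding zb3_def by (rule g3[OF h(1,2,3)])
  have e2: "12 * zb1 n + zb2 n * (4*(n+6)) = 0" unfolding q2 zb1_def by simp
  have e3: "2 * zb2 n + zb3 n * (6*(n+4)) = 0" unfolding q3 zb2_def by simp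
  have "30*A + zb1 n * (12*B + cc n 1 4 * A) + zb2 n * (2*C + cc n 2 2 * B) + zb3 n * (cc n 3 0 * C)
     = A * (30 + zb1 n * (2*(n+8))) + B * (12 * zb1 n + zb2 n * (4*(n+6))) + C * (2 * zb2 n + zb3 n * (6*(n+4)))"
    unfolding c by (simp add: algebra_simps)
  then show ?thesis using e1 e2 e3 by simp
qed

lemma harm_Z6: fixes y :: "real^'n::finite" assumes "y \<bullet> y = 1" shows "harmonic_poly (Z6 y)"
proof -
  let ?n = "real CARD('n)"
  have n0: "?n > 0" by simp
  have "lap (Z6 y) a = 0" for a
  proof -
    have "lap (Z6 y) a = 30 * T y 0 4 a + zb1 ?n * (12 * T y 1 2 a + cc ?n 1 4 * T y 0 4 a)
       + zb2 ?n * (2 * T y 2 0 a + cc ?n 2 2 * T y 1 2 a) + zb3 ?n * (cc ?n 3 0 * T y 2 0 a)"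
      unfolding Z6_def lap4 lap_T by (simp add: assms cc_def)
    also have "\<dots> = 0"
      by (rule zonal_coeff[OF n0])
    finally show ?thesis .
  qed
  then show ?thesis by (simp add: harmonic_lap)
qed

lemma harm_W2: fixes u :: "real^'n::finite" shows "harmonic_poly (W2 u)"
proof -
  let ?n = "real CARD('n)"
  have n0: "?n > 0" by simp
  have "lap (W2 u) a = 0" for a
  proof -
    have "lap (W2 u) a = 2 * (u \<bullet> u) * T u 0 0 a + (- (u \<bullet> u) / ?n) * (cc ?n 1 0 * T u 0 0 a)"
      unfolding W2_def lap2 lap_T by (simp add: cc_def)
    also have "\<dots> = 0" using n0 by (simp add: cc_def field_simps)
    finally show ?thesis .
  qed
  then show ?thesis by (simp add: harmonic_lap)
qed

lemma design_facts:
  fixes Y :: "(real^'n::finite) set"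
  assumes D: "harmonic_index_design {6, 2} Y"
  shows "finite Y" "\<forall>x\<in>Y. x \<bullet> x = 1"
    "\<forall>u. (\<Sum>x\<in>Y. (u \<bullet> x)^2) = real (card Y) * (u \<bullet> u) / real CARD('n)"
    "\<forall>y. y \<bullet> y = 1 \<longrightarrow> (\<Sum>x\<in>Y. (y \<bullet> x)^6 + zb1 (real CARD('n)) * (y \<bullet> x)^4
        + zb2 (real CARD('n)) * (y \<bullet> x)^2 + zb3 (real CARD('n))) = 0"
proof -
  show fin: "finite Y" using D by (simp add: harmonic_index_design_def)
  show unit: "\<forall>x\<in>Y. x \<bullet> x = 1"
  proof
    fix x assume "x \<in> Y"
    then have "norm x = 1" using D by (auto simp: harmonic_index_design_def)
    then show "x \<bullet> x = 1" by (simp add: power2_norm_eq_inner[symmetric])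
  qed
  have imp: "\<And>c k. is_poly c \<Longrightarrow> homogeneous_of_degree k c \<Longrightarrow> harmonic_poly c \<Longrightarrow> k \<in> {6,2} \<Longrightarrow>
     (\<Sum>x\<in>Y. poly_eval c x) = 0"
    using D unfolding harmonic_index_design_def by blast
  show "\<forall>u. (\<Sum>x\<in>Y. (u \<bullet> x)^2) = real (card Y) * (u \<bullet> u) / real CARD('n)"
  proof
    fix u :: "real^'n"
    have "(\<Sum>x\<in>Y. poly_eval (W2 u) x) = 0"
      by (rule imp[OF hom_is_poly[OF hom_W2] hom_W2 harm_W2]) simp
    moreover have "(\<Sum>x\<in>Y. poly_eval (W2 u) x) = (\<Sum>x\<in>Y. (u \<bullet> x)^2 - (u \<bullet> u) / real CARD('n))"
      by (intro sum.cong refl) (simp add: eval_W2 unit)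
    ultimately show "(\<Sum>x\<in>Y. (u \<bullet> x)^2) = real (card Y) * (u \<bullet> u) / real CARD('n)"
      by (simp add: sum_subtractf)
  qed
  show "\<forall>y. y \<bullet> y = 1 \<longrightarrow> (\<Sum>x\<in>Y. (y \<bullet> x)^6 + zb1 (real CARD('n)) * (y \<bullet> x)^4
        + zb2 (real CARD('n)) * (y \<bullet> x)^2 + zb3 (real CARD('n))) = 0"
  proof (intro allI impI)
    fix y :: "real^'n" assume y1: "y \<bullet> y = 1"
    have "(\<Sum>x\<in>Y. poly_eval (Z6 y) x) = 0"
      by (rule imp[OF hom_is_poly[OF hom_Z6] hom_Z6 harm_Z6[OF y1]]) simp
    moreover have "(\<Sum>x\<in>Y. poly_eval (Z6 y) x) = (\<Sum>x\<in>Y. (y \<bullet> x)^6 + zb1 (real CARD('n)) * (y \<bullet> x)^4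
        + zb2 (real CARD('n)) * (y \<bullet> x)^2 + zb3 (real CARD('n)))"
      by (intro sum.cong refl) (simp add: eval_Z6 unit)
    ultimately show "(\<Sum>x\<in>Y. (y \<bullet> x)^6 + zb1 (real CARD('n)) * (y \<bullet> x)^4
        + zb2 (real CARD('n)) * (y \<bullet> x)^2 + zb3 (real CARD('n))) = 0" by simp
  qed
qed




lemma no_rat_sq: fixes m r :: int assumes m: "m = 4*r + 2" and q: "q \<in> \<rat>"
  shows "q^2 \<noteq> (of_int m :: real)"
proof
  assume sq: "q^2 = of_int m"
  obtain a b :: int where b: "b > 0" and cop: "coprime a b" and qe: "q = of_int a / of_int b"
    using q by (rule Rats_cases')
  have "(of_int a / of_int b)^2 = (of_int m :: real)" using sq qe by simp
  then have "(of_int a)^2 = (of_int m :: real) * (of_int b)^2" using b by (simp add: field_simps power2_eq_square)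
  then have "of_int (a^2) = (of_int (m * b^2) :: real)" by simp
  then have e: "a^2 = m * b^2" by (simp only: of_int_eq_iff)
  then have "even (a^2)" using m by simp
  then have "even a" by simp
  then obtain c where c: "a = 2*c" by blast
  have "4*c^2 = (4*r+2) * b^2" using e c m by (simp add: power2_eq_square algebra_simps)
  then have "2*c^2 = (2*r+1) * b^2" by (simp add: algebra_simps)
  then have "even ((2*r+1) * b^2)" by (metis dvd_triv_left)
  then have "even b" by simp
  then have "is_unit (2::int)" using coprime_common_divisor[OF cop \<open>even a\<close>] by blast
  then show False by simp
qed

lemma final_arg:
  fixes Y :: "(real^'n::finite) set" and nn N b1 b2 b3 \<beta> \<alpha>2 c :: real
  assumes fin: "finite Y" and unit: "\<forall>x\<in>Y. x \<bullet> x = 1"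
    and quad: "\<forall>u. (\<Sum>x\<in>Y. (u \<bullet> x)^2) = N * (u \<bullet> u) / nn"
    and zon: "\<forall>y. y \<bullet> y = 1 \<longrightarrow> (\<Sum>x\<in>Y. (y \<bullet> x)^6 + b1 * (y \<bullet> x)^4 + b2 * (y \<bullet> x)^2 + b3) = 0"
    and pol: "\<forall>t. t^6 + b1 * t^4 + b2 * t^2 + b3 + \<beta> * (t^2 - 1/nn) = t^2 * (t^2 - \<alpha>2)^2 - c"
    and g1: "(1 - \<alpha>2)^2 = N * c"
    and NY: "N = real (card Y)"
    and nn0: "nn > 0" and Nn: "N \<noteq> nn" and N2: "N \<noteq> 2 * nn"
    and aQ: "\<alpha>2 \<in> \<rat>" and nnQ: "nn \<in> \<rat>" and irr: "\<forall>q\<in>\<rat>. q^2 \<noteq> \<alpha>2"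
  shows False
proof -
  have key: "(y \<bullet> x)^2 = 0 \<or> (y \<bullet> x)^2 = \<alpha>2" if y: "y \<in> Y" and x: "x \<in> Y" "x \<noteq> y" for x y
  proof -
    let ?g = "\<lambda>t::real. t^2 * (t^2 - \<alpha>2)^2"
    have yy: "y \<bullet> y = 1" using unit y by blast
    have s2: "(\<Sum>x\<in>Y. (y \<bullet> x)^2) = N / nn" using quad yy by simp
    have "(\<Sum>x\<in>Y. ?g (y \<bullet> x) - c) = (\<Sum>x\<in>Y. ((y \<bullet> x)^6 + b1 * (y \<bullet> x)^4 + b2 * (y \<bullet> x)^2 + b3)
        + \<beta> * ((y \<bullet> x)^2 - 1/nn))"
      using pol by simp
    also have "\<dots> = \<beta> * ((\<Sum>x\<in>Y. (y \<bullet> x)^2) - N / nn)"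
      using zon yy NY by (simp add: sum.distrib sum_distrib_left[symmetric] sum_subtractf)
    also have "\<dots> = 0" using s2 by simp
    finally have "(\<Sum>x\<in>Y. ?g (y \<bullet> x)) = N * c" using NY by (simp add: sum_subtractf)
    moreover have "(\<Sum>x\<in>Y. ?g (y \<bullet> x)) = ?g (y \<bullet> y) + (\<Sum>x\<in>Y - {y}. ?g (y \<bullet> x))"
      using fin y by (simp add: sum.remove)
    moreover have "?g (y \<bullet> y) = N * c" using yy g1 by simp
    ultimately have s0: "(\<Sum>x\<in>Y - {y}. ?g (y \<bullet> x)) = 0" by linarith
    moreover have nn: "\<And>x. x \<in> Y - {y} \<Longrightarrow> ?g (y \<bullet> x) \<ge> 0"
      by simp
    have "\<forall>x\<in>Y - {y}. ?g (y \<bullet> x) = 0"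
      using sum_nonneg_eq_0_iff[of "Y - {y}" "\<lambda>x. ?g (y \<bullet> x)"] fin nn s0 by simp
    then have "?g (y \<bullet> x) = 0" using x by blast
    then show ?thesis by simp
  qed
  have "N > 0"
  proof (rule ccontr)
    assume "\<not> N > 0"
    then have "N = 0" using NY by simp
    then have "(1 - \<alpha>2)^2 = 0" using g1 by simp
    then have "\<alpha>2 = 1^2" by simp
    then show False using irr Rats_1 by blast
  qed
  then have "Y \<noteq> {}" using NY by auto
  then obtain y where y: "y \<in> Y" by blast
  have yy: "y \<bullet> y = 1" using unit y by blast
  obtain z where z: "z \<in> Y" "z \<noteq> y" "(y \<bullet> z)^2 = \<alpha>2"
  proof -
    have "\<exists>z\<in>Y - {y}. (y \<bullet> z)^2 \<noteq> 0"
    proof (rule ccontr)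
      assume "\<not> ?thesis"
      then have "\<forall>x\<in>Y - {y}. (y \<bullet> x)^2 = 0" by blast
      then have "(\<Sum>x\<in>Y - {y}. (y \<bullet> x)^2) = 0" by simp
      moreover have "(\<Sum>x\<in>Y. (y \<bullet> x)^2) = (y \<bullet> y)^2 + (\<Sum>x\<in>Y - {y}. (y \<bullet> x)^2)"
        by (rule sum.remove[OF fin y])
      moreover have "(\<Sum>x\<in>Y. (y \<bullet> x)^2) = N * (y \<bullet> y) / nn" using quad by blast
      ultimately have "N * (y \<bullet> y) / nn = (y \<bullet> y)^2" by simp
      then have "N / nn = 1" using yy by simp
      then show False using Nn nn0 by (simp add: field_simps)
    qed
    then obtain z where "z \<in> Y - {y}" "(y \<bullet> z)^2 \<noteq> 0" by blast
    then show ?thesis using that key[OF y, of z] by auto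
  qed
  have zz: "z \<bullet> z = 1" using unit z by blast
  have bil: "(\<Sum>x\<in>Y. (y \<bullet> x) * (z \<bullet> x)) = N / nn * (y \<bullet> z)"
  proof -
    have "4 * (\<Sum>x\<in>Y. (y \<bullet> x) * (z \<bullet> x)) = (\<Sum>x\<in>Y. ((y + z) \<bullet> x)^2) - (\<Sum>x\<in>Y. ((y - z) \<bullet> x)^2)"
      by (simp add: sum_subtractf[symmetric] sum_distrib_left inner_add_left inner_diff_left power2_eq_square algebra_simps)
    also have "\<dots> = N * ((y + z) \<bullet> (y + z)) / nn - N * ((y - z) \<bullet> (y - z)) / nn" using quad by simp
    also have "\<dots> = 4 * (N / nn * (y \<bullet> z))"
      using nn0 by (simp add: inner_add_left inner_add_right inner_diff_left inner_diff_right inner_commute field_simps)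
    finally show ?thesis by simp
  qed
  define S where "S = (\<Sum>x\<in>Y - {y} - {z}. (y \<bullet> x) * (z \<bullet> x))"
  have "(\<Sum>x\<in>Y. (y \<bullet> x) * (z \<bullet> x)) = (y \<bullet> y) * (z \<bullet> y) + (\<Sum>x\<in>Y - {y}. (y \<bullet> x) * (z \<bullet> x))"
    by (rule sum.remove[OF fin y])
  also have "(\<Sum>x\<in>Y - {y}. (y \<bullet> x) * (z \<bullet> x)) = (y \<bullet> z) * (z \<bullet> z) + S"
    unfolding S_def by (rule sum.remove) (use fin z in auto)
  finally have "N / nn * (y \<bullet> z) = 2 * (y \<bullet> z) + S" using bil yy zz by (simp add: inner_commute)
  then have yzS: "(N / nn - 2) * (y \<bullet> z) = S" by (simp add: algebra_simps)
  have SQ: "S \<in> \<rat>" unfolding S_def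
  proof (rule Rats_sum)
    fix x assume x: "x \<in> Y - {y} - {z}"
    have a: "(y \<bullet> x)^2 = 0 \<or> (y \<bullet> x)^2 = \<alpha>2" using key[OF y, of x] x by auto
    have b: "(z \<bullet> x)^2 = 0 \<or> (z \<bullet> x)^2 = \<alpha>2" using key[OF z(1), of x] x by auto
    show "(y \<bullet> x) * (z \<bullet> x) \<in> \<rat>"
    proof (cases "(y \<bullet> x)^2 = 0 \<or> (z \<bullet> x)^2 = 0")
      case True then show ?thesis by auto
    next
      case False
      then have ya: "(y \<bullet> x)^2 = \<alpha>2" and za: "(z \<bullet> x)^2 = \<alpha>2" using a b by auto
      have "((y \<bullet> x) * (z \<bullet> x))^2 = \<alpha>2^2"
        unfolding power_mult_distrib ya za by (simp add: power2_eq_square)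
      then have "(y \<bullet> x) * (z \<bullet> x) = \<alpha>2 \<or> (y \<bullet> x) * (z \<bullet> x) = - \<alpha>2"
        by (simp add: power2_eq_iff)
      then show ?thesis using aQ by auto
    qed
  qed
  have d0: "N / nn - 2 \<noteq> 0" using N2 nn0 by (simp add: field_simps)
  have "y \<bullet> z = S / (N / nn - 2)" using yzS d0 by (simp add: field_simps)
  moreover have "N / nn - 2 \<in> \<rat>"
  proof -
    have "N \<in> \<rat>" using NY by simp
    moreover note nnQ
    ultimately show ?thesis by simp
  qed
  ultimately have "y \<bullet> z \<in> \<rat>" using SQ by simp
  then show False using irr z(3) by blast
qed




lemma irr12: "\<forall>q\<in>\<rat>. q^2 \<noteq> (3/8::real)"
proof (intro ballI notI)
  fix q :: real assume q: "q \<in> \<rat>" and e: "q^2 = 3/8"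
  have "(4*q) \<in> \<rat>" using q by simp
  moreover have "(4*q)^2 = of_int (4*1+2)" using e by (simp add: power_mult_distrib)
  ultimately show False using no_rat_sq[of "4*1+2" 1 "4*q"] by simp
qed

lemma irr92: "\<forall>q\<in>\<rat>. q^2 \<noteq> (3/40::real)"
proof (intro ballI notI)
  fix q :: real assume q: "q \<in> \<rat>" and e: "q^2 = 3/40"
  have "(20*q) \<in> \<rat>" using q by simp
  moreover have "(20*q)^2 = of_int (4*7+2)" using e by (simp add: power_mult_distrib)
  ultimately show False using no_rat_sq[of "4*7+2" 7 "20*q"] by simp
qed

lemma pol12: "\<forall>t::real. t^6 + zb1 12 * t^4 + zb2 12 * t^2 + zb3 12 + 1/64 * (t^2 - 1/12) = t^2 * (t^2 - 3/8)^2 - 1/256"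
  by (simp add: zb1_def zb2_def zb3_def eval_nat_numeral field_simps)

lemma pol92: "\<forall>t::real. t^6 + zb1 92 * t^4 + zb2 92 * t^2 + zb3 92 + 81/78400 * (t^2 - 1/92) = t^2 * (t^2 - 3/40)^2 - 1/36800"
  by (simp add: zb1_def zb2_def zb3_def eval_nat_numeral field_simps)

theorem mainTheorem8:
  assumes "CARD('n::finite) \<ge> 3"
  shows "\<not> (\<exists>Y :: (real ^ 'n) set. harmonic_index_design {6, 2} Y \<and>
            real (card Y) = (let n = real CARD('n) in
               n * (n + 4) * (2 * n + 1)^2 / (15 * (7 * n - 4))))"
proof
  assume "\<exists>Y :: (real ^ 'n) set. harmonic_index_design {6, 2} Y \<and>
            real (card Y) = (let n = real CARD('n) in
               n * (n + 4) * (2 * n + 1)^2 / (15 * (7 * n - 4)))"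
  then obtain Y :: "(real^'n) set" where D: "harmonic_index_design {6, 2} Y"
    and cY: "real (card Y) = (let n = real CARD('n) in n * (n + 4) * (2 * n + 1)^2 / (15 * (7 * n - 4)))"
    by blast
  define n where "n = CARD('n)"
  have n3: "n \<ge> 3" using assms n_def by simp
  have cY': "real (card Y) = real n * (real n + 4) * (2 * real n + 1)^2 / (15 * (7 * real n - 4))"
    using cY by (simp add: n_def Let_def)
  have pos: "15 * (7 * real n - 4) > 0" using n3 by simp
  have "real (card Y) * (15 * (7 * real n - 4)) = real n * (real n + 4) * (2 * real n + 1)^2"
    using cY' pos by (simp add: field_simps)
  moreover have "real (7*n - 4) = 7 * real n - 4" using n3 by (simp add: of_nat_diff)
  ultimately have "real (card Y * (15*(7*n-4))) = real (n*(n+4)*(2*n+1)^2)" by simp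
  then have eqN: "card Y * (15*(7*n-4)) = n*(n+4)*(2*n+1)^2" by (simp only: of_nat_eq_iff)
  have F: "finite Y" "\<forall>x\<in>Y. x \<bullet> x = 1"
    "\<forall>u. (\<Sum>x\<in>Y. (u \<bullet> x)^2) = real (card Y) * (u \<bullet> u) / real CARD('n)"
    "\<forall>y. y \<bullet> y = 1 \<longrightarrow> (\<Sum>x\<in>Y. (y \<bullet> x)^6 + zb1 (real CARD('n)) * (y \<bullet> x)^4
        + zb2 (real CARD('n)) * (y \<bullet> x)^2 + zb3 (real CARD('n))) = 0"
    using design_facts[OF D] by blast+
  from nt[OF n3 eqN] show False
  proof
    assume n12: "n = 12"
    then have cn: "real CARD('n) = 12" using n_def by simp
    have cy: "card Y = 100" using eqN n12 by simp
    show False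
      by (rule final_arg[OF F(1,2) F(3)[unfolded cn] F(4)[unfolded cn] pol12 _ _ _ _ _ _ _ irr12])
         (simp_all add: cy power2_eq_square)
  next
    assume n92: "n = 92"
    then have cn: "real CARD('n) = 92" using n_def by simp
    have cy: "card Y = 31487" using eqN n92 by simp
    show False
      by (rule final_arg[OF F(1,2) F(3)[unfolded cn] F(4)[unfolded cn] pol92 _ _ _ _ _ _ _ irr92])
         (simp_all add: cy power2_eq_square)
  qed
qed


end
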